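(* Let $N\ge 1$ be an integer and let $M$ be the set of pairs produced by the born-free matching algorithm for $N$. Then $M$ is a matching of the graph $G_N$ and $G_N$ contains no flat alternating cycle with respect to $M$.
   Context: For a positive integer $N$, let $G_N$ be the graph with vertex set $\{1,\dots,N\}$ in which $x$ and $y$ are adjacent iff $y=px$ or $x=py$ for some prime $p$. The rank of $n$ is $\Omega(n)$, the number of prime factors of $n$ counted with multiplicity. A matching is a set of edges no two sharing an endpoint. A cycle is alternating (with respect to a matching) if exactly every other edge of the cycle lies in the matching; it is flat if for some integer $k$ all its vertices have rank $k$ or $k+1$. For a prime $p$, let $S_p=\{(x,px): x\in\mathbb{N},\ px\le N\}$. The born-free matching algorithm for $N$: start with $M=\emptyset$; run through the primes $p\le N$ in descending order; for each such $p$, run through the pairs $(x,px)\in S_p$ in descending order of $x$, and add $(x,px)$ to $M$ whenever neither $x$ nor $px$ is an endpoint of a pair already in $M$. *)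

theory Defs
  imports "HOL-Computational_Algebra.Primes"
begin

definition G_adj :: "nat \<Rightarrow> nat \<Rightarrow> nat \<Rightarrow> bool" where
  "G_adj N x y \<longleftrightarrow> x \<in> {1..N} \<and> y \<in> {1..N} \<and>
     (\<exists>p::nat. prime p \<and> (y = p * x \<or> x = p * y))"

definition G_edges :: "nat \<Rightarrow> nat set set" where
  "G_edges N = {{x, y} | x y. G_adj N x y}"

definition rank :: "nat \<Rightarrow> nat" where
  "rank n = size (prime_factorization n)"

definition is_matching :: "nat set set \<Rightarrow> nat set set \<Rightarrow> bool" where
  "is_matching E M \<longleftrightarrow> M \<subseteq> E \<and> (\<forall>e\<in>M. \<forall>e'\<in>M. e \<noteq> e' \<longrightarrow> e \<inter> e' = {})"

definition cyc_edge :: "nat list \<Rightarrow> nat \<Rightarrow> nat set" where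
  "cyc_edge vs i = {vs ! i, vs ! ((i + 1) mod length vs)}"

definition is_cycle :: "nat \<Rightarrow> nat list \<Rightarrow> bool" where
  "is_cycle N vs \<longleftrightarrow> length vs \<ge> 3 \<and> distinct vs \<and>
     (\<forall>i < length vs. G_adj N (vs ! i) (vs ! ((i + 1) mod length vs)))"

definition alternating :: "nat set set \<Rightarrow> nat list \<Rightarrow> bool" where
  "alternating M vs \<longleftrightarrow>
     (\<forall>i < length vs. cyc_edge vs i \<in> M \<longleftrightarrow> cyc_edge vs ((i + 1) mod length vs) \<notin> M)"

definition flat :: "nat list \<Rightarrow> bool" where
  "flat vs \<longleftrightarrow> (\<exists>k. \<forall>v \<in> set vs. rank v = k \<or> rank v = k + 1)"

text \<open>Born-free matching algorithm. Candidate pairs (x, p x) in the order: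
  primes p <= N descending, and for each p, x descending.\<close>
definition bf_order :: "nat \<Rightarrow> (nat \<times> nat) list" where
  "bf_order N = concat (map (\<lambda>p. map (\<lambda>x. (x, p * x)) (rev [1..<N div p + 1]))
                          (rev (filter prime [1..<N + 1])))"

definition endpoints :: "(nat \<times> nat) set \<Rightarrow> nat set" where
  "endpoints M = fst ` M \<union> snd ` M"

definition bf_step :: "(nat \<times> nat) set \<Rightarrow> nat \<times> nat \<Rightarrow> (nat \<times> nat) set" where
  "bf_step M e = (if fst e \<notin> endpoints M \<and> snd e \<notin> endpoints M then insert e M else M)"

definition born_free :: "nat \<Rightarrow> (nat \<times> nat) set" where
  "born_free N = foldl bf_step {} (bf_order N)"

definition born_free_edges :: "nat \<Rightarrow> nat set set" where
  "born_free_edges N = (\<lambda>(x, y). {x, y}) ` born_free N"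

end

theory Submission
  imports Defs
begin


lemma rank_mult_prime:
  assumes "prime (p::nat)" "x > 0" shows "rank (p * x) = rank x + 1"
  using assms by (simp add: rank_def prime_factorization_times_prime)

definition R :: "nat \<times> nat \<Rightarrow> nat \<times> nat \<Rightarrow> bool" where
  "R a b \<longleftrightarrow> snd a div fst a > snd b div fst b \<or>
      (snd a div fst a = snd b div fst b \<and> fst a > fst b)"

lemma set_bf_order:
  "e \<in> set (bf_order N) \<longleftrightarrow> (\<exists>p x. prime p \<and> 1 \<le> x \<and> p * x \<le> N \<and> e = (x, p * x))"
proof
  assume "e \<in> set (bf_order N)"
  then obtain p x where "prime p" "p \<le> N" "x \<in> {1..<N div p + 1}" "e = (x, p*x)"
    by (auto simp: bf_order_def)
  moreover have "p > 0" using \<open>prime p\<close> prime_gt_0_nat by blast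
  moreover have "x \<le> N div p" "1 \<le> x" using \<open>x \<in> _\<close> by auto
  ultimately have "1 \<le> x" "p * x \<le> N" using less_eq_div_iff_mult_less_eq[of p x N] by (auto simp: mult.commute)
  then show "\<exists>p x. prime p \<and> 1 \<le> x \<and> p * x \<le> N \<and> e = (x, p * x)"
    using \<open>prime p\<close> \<open>e = _\<close> by blast
next
  assume "\<exists>p x. prime p \<and> 1 \<le> x \<and> p * x \<le> N \<and> e = (x, p * x)"
  then obtain p x where h: "prime p" "1 \<le> x" "p * x \<le> N" "e = (x, p*x)" by blast
  have "p > 0" using h prime_gt_0_nat by blast
  have "p \<le> N" proof -
    have "p * 1 \<le> p * x" using h(2) by (rule mult_le_mono2)
    then show ?thesis using h(3) by linarith
  qed
  have "x \<le> N div p" using h \<open>p>0\<close> by (simp add: less_eq_div_iff_mult_less_eq mult.commute)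
  have hp: "p \<in> set (rev (filter prime [1..<N + 1]))" using h \<open>p \<le> N\<close> \<open>p>0\<close> by (simp del: upt_Suc)
  have hx: "e \<in> set (map (\<lambda>x. (x, p * x)) (rev [1..<N div p + 1]))"
    using h \<open>x \<le> N div p\<close> by (simp del: upt_Suc)
  show "e \<in> set (bf_order N)" unfolding bf_order_def set_concat set_map using hp hx by blast
qed

lemma sorted_bf_order: "sorted_wrt R (bf_order N)"
proof -
  define f where "f = (\<lambda>p. map (\<lambda>x. (x, p * x)) (rev [1..<N div p + 1]))"
  have key: "\<And>p. prime p \<Longrightarrow> \<forall>e \<in> set (f p). snd e div fst e = p \<and> fst e \<ge> 1"
    by (auto simp: f_def)
  have "sorted_wrt R (concat (map f ps))" if "sorted_wrt (>) ps" "\<forall>p\<in>set ps. prime p" for ps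
    using that
  proof (induction ps)
    case Nil then show ?case by simp
  next
    case (Cons p ps)
    have "sorted_wrt (\<lambda>x y. R (x, p*x) (y, p*y)) (rev [1..<N div p + 1])"
      unfolding sorted_wrt_rev
      by (rule sorted_wrt_mono_rel[OF _ sorted_wrt_upt]) (auto simp: R_def)
    then have s1: "sorted_wrt R (f p)" by (simp add: f_def sorted_wrt_map)
    have s3: "\<forall>a\<in>set (f p). \<forall>b\<in>set (concat (map f ps)). R a b"
    proof (intro ballI)
      fix a b assume a: "a \<in> set (f p)" and b: "b \<in> set (concat (map f ps))"
      then obtain p' where p': "p' \<in> set ps" "b \<in> set (f p')" by auto
      have "p > p'" using Cons.prems p' by auto
      then show "R a b" using key[of p] key[of p'] Cons.prems p' a by (auto simp: R_def)
    qed
    show ?case using Cons s1 s3 by (simp add: sorted_wrt_append)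
  qed
  moreover have "sorted_wrt (>) (rev (filter prime [1..<N + 1]))"
    unfolding sorted_wrt_rev by (rule sorted_wrt_filter, rule sorted_wrt_upt)
  ultimately show ?thesis unfolding bf_order_def f_def[symmetric] by simp
qed

lemma fold_inv:
  "foldl bf_step {} L \<subseteq> set L \<and>
   (\<forall>e\<in>foldl bf_step {} L. \<forall>e'\<in>foldl bf_step {} L. e \<noteq> e' \<longrightarrow> {fst e, snd e} \<inter> {fst e', snd e'} = {})"
proof (induction L rule: rev_induct)
  case Nil then show ?case by simp
next
  case (snoc e L)
  let ?M = "foldl bf_step {} L"
  have IH1: "?M \<subseteq> set L" and IH2: "\<forall>e\<in>?M. \<forall>e'\<in>?M. e \<noteq> e' \<longrightarrow> {fst e, snd e} \<inter> {fst e', snd e'} = {}"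
    using snoc by blast+
  show ?case
  proof (cases "fst e \<notin> endpoints ?M \<and> snd e \<notin> endpoints ?M")
    case True
    then have eq: "foldl bf_step {} (L @ [e]) = insert e ?M" by (simp add: bf_step_def)
    have d: "\<And>e'. e' \<in> ?M \<Longrightarrow> {fst e, snd e} \<inter> {fst e', snd e'} = {}"
    proof -
      fix e' assume "e' \<in> ?M"
      then have "fst e' \<in> endpoints ?M" "snd e' \<in> endpoints ?M" by (auto simp: endpoints_def)
      then show "{fst e, snd e} \<inter> {fst e', snd e'} = {}" using True by auto
    qed
    have "\<forall>x\<in>insert e ?M. \<forall>y\<in>insert e ?M. x \<noteq> y \<longrightarrow> {fst x, snd x} \<inter> {fst y, snd y} = {}"
    proof (intro ballI impI)
      fix x y assume x: "x \<in> insert e ?M" and y: "y \<in> insert e ?M" and xy: "x \<noteq> y"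
      show "{fst x, snd x} \<inter> {fst y, snd y} = {}"
      proof (cases "x = e")
        case True then show ?thesis using d y xy by auto
      next
        case False
        then have xM: "x \<in> ?M" using x by simp
        show ?thesis
        proof (cases "y = e")
          case True then show ?thesis using d[OF xM] by (simp add: Int_commute)
        next
          case False then show ?thesis using IH2 xM y xy by simp
        qed
      qed
    qed
    then show ?thesis unfolding eq using IH1 by auto
  next
    case False
    then have eq: "foldl bf_step {} (L @ [e]) = ?M" unfolding bf_step_def by auto
    show ?thesis unfolding eq using IH1 IH2 by auto
  qed
qed

lemma fold_block:
  assumes "sorted_wrt R L"
  shows "\<forall>e\<in>set L. e \<in> foldl bf_step {} L \<or>
     (\<exists>e'\<in>foldl bf_step {} L. R e' e \<and> (fst e \<in> {fst e', snd e'} \<or> snd e \<in> {fst e', snd e'}))"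
  using assms
proof (induction L rule: rev_induct)
  case Nil then show ?case by simp
next
  case (snoc e L)
  let ?M = "foldl bf_step {} L"
  have sub: "?M \<subseteq> bf_step ?M e" by (auto simp: bf_step_def)
  have IH: "\<forall>e\<in>set L. e \<in> ?M \<or> (\<exists>e'\<in>?M. R e' e \<and> (fst e \<in> {fst e', snd e'} \<or> snd e \<in> {fst e', snd e'}))"
    using snoc by (simp add: sorted_wrt_append)
  have RL: "\<forall>e'\<in>set L. R e' e" using snoc.prems by (simp add: sorted_wrt_append)
  have Msub: "?M \<subseteq> set L" using fold_inv by blast
  have new: "e \<in> bf_step ?M e \<or> (\<exists>e'\<in>bf_step ?M e. R e' e \<and> (fst e \<in> {fst e', snd e'} \<or> snd e \<in> {fst e', snd e'}))"
  proof (cases "fst e \<notin> endpoints ?M \<and> snd e \<notin> endpoints ?M")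
    case True then show ?thesis by (simp add: bf_step_def)
  next
    case False
    then obtain e' where "e' \<in> ?M" "fst e \<in> {fst e', snd e'} \<or> snd e \<in> {fst e', snd e'}"
      by (auto simp: endpoints_def)
    then show ?thesis using RL Msub sub by blast
  qed
  show ?case using IH sub new by auto
qed



lemma bf_pairs:
  assumes "e \<in> born_free N"
  shows "\<exists>p x. prime p \<and> 1 \<le> x \<and> p * x \<le> N \<and> e = (x, p * x)"
proof -
  have sub: "born_free N \<subseteq> set (bf_order N)" unfolding born_free_def by (rule conjunct1[OF fold_inv])
  then have "e \<in> set (bf_order N)" using assms by (rule subsetD)
  then show ?thesis by (simp only: set_bf_order)
qed

lemma bf_disj:
  assumes "e \<in> born_free N" "e' \<in> born_free N" "e \<noteq> e'"
  shows "{fst e, snd e} \<inter> {fst e', snd e'} = {}"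
proof -
  have d: "\<forall>e\<in>born_free N. \<forall>e'\<in>born_free N. e \<noteq> e' \<longrightarrow> {fst e, snd e} \<inter> {fst e', snd e'} = {}"
    unfolding born_free_def by (rule conjunct2[OF fold_inv])
  show ?thesis using d assms by blast
qed

lemma bfe_mem:
  assumes "s \<in> born_free_edges N"
  obtains e where "e \<in> born_free N" "s = {fst e, snd e}"
proof -
  obtain e where e: "e \<in> born_free N" "s = (\<lambda>(x, y). {x, y}) e"
    using assms unfolding born_free_edges_def by blast
  then have "s = {fst e, snd e}" by (cases e) simp
  then show ?thesis using that e(1) by blast
qed

lemma matching: "is_matching (G_edges N) (born_free_edges N)"
  unfolding is_matching_def
proof
  show "born_free_edges N \<subseteq> G_edges N"
  proof
    fix s assume "s \<in> born_free_edges N"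
    then obtain e where e: "e \<in> born_free N" "s = {fst e, snd e}"
      by (rule bfe_mem)
    then obtain p x where h: "prime p" "1 \<le> x" "p * x \<le> N" "e = (x, p * x)"
      using bf_pairs by blast
    have "1 \<le> p" using h prime_gt_0_nat by (simp add: Suc_le_eq)
    then have "x \<le> p * x" by simp
    then have "x \<le> N" using h(3) by linarith
    then have "x \<in> {1..N}" "p * x \<in> {1..N}" using h \<open>1 \<le> p\<close> by auto
    then have "G_adj N x (p * x)" using h(1) unfolding G_adj_def by blast
    moreover have "s = {x, p * x}" using e h by simp
    ultimately show "s \<in> G_edges N" unfolding G_edges_def by blast
  qed
next
  show "\<forall>e\<in>born_free_edges N. \<forall>e'\<in>born_free_edges N. e \<noteq> e' \<longrightarrow> e \<inter> e' = {}"
  proof (intro ballI impI)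
    fix s s' assume a: "s \<in> born_free_edges N" "s' \<in> born_free_edges N" "s \<noteq> s'"
    obtain e where e: "e \<in> born_free N" "s = {fst e, snd e}" using a(1) by (rule bfe_mem)
    obtain e' where e': "e' \<in> born_free N" "s' = {fst e', snd e'}" using a(2) by (rule bfe_mem)
    have "e \<noteq> e'" using a(3) e e' by blast
    then show "s \<inter> s' = {}" using bf_disj[OF e(1) e'(1)] e e' by simp
  qed
qed

lemma block:
  assumes "prime q" "1 \<le> y" "q * y \<le> N" "(y, q * y) \<notin> born_free N"
  shows "\<exists>p x. (x, p * x) \<in> born_free N \<and> prime p \<and> 1 \<le> x \<and>
     (y \<in> {x, p * x} \<or> q * y \<in> {x, p * x}) \<and> (p > q \<or> (p = q \<and> x > y))"
proof -
  have "(y, q * y) \<in> set (bf_order N)" using assms set_bf_order by blast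
  then obtain e' where e': "e' \<in> born_free N" "R e' (y, q * y)"
    "y \<in> {fst e', snd e'} \<or> q * y \<in> {fst e', snd e'}"
    using fold_block[OF sorted_bf_order[of N]] assms(4) unfolding born_free_def by fastforce
  then obtain p x where h: "prime p" "1 \<le> x" "e' = (x, p * x)" using bf_pairs by blast
  have "q * y div y = q" "p * x div x = p" using assms h by auto
  then show ?thesis using e' h unfolding R_def by auto
qed

lemma adj_info:
  assumes "G_adj N u w"
  shows "prime (max u w div min u w) \<and> 1 \<le> min u w \<and>
         max u w = (max u w div min u w) * min u w \<and> min u w < max u w"
proof -
  obtain p where p: "prime p" "u \<in> {1..N}" "w \<in> {1..N}" "w = p * u \<or> u = p * w"
    using assms unfolding G_adj_def by blast
  have p2: "p \<ge> 2" using p prime_ge_2_nat by blast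
  show ?thesis
  proof (cases "w = p * u")
    case True
    have "u < w" using True p2 p(2) by (simp add: less_le_trans[of u "2*u"])
    then show ?thesis using True p by auto
  next
    case False
    then have "u = p * w" using p by blast
    have "w < u" using \<open>u = p * w\<close> p2 p(3) by (simp add: less_le_trans[of w "2*w"])
    then show ?thesis using \<open>u = p * w\<close> p by auto
  qed
qed

lemma prod_shift:
  fixes n :: nat
  assumes "n > 0"
  shows "(\<Prod>i<n. f ((i + 1) mod n)) = (\<Prod>i<n. (f i :: nat))"
proof -
  obtain m where m: "n = Suc m" using assms not0_implies_Suc by blast
  have "(\<Prod>i<Suc m. f ((i + 1) mod Suc m)) = (\<Prod>i<m. f ((i + 1) mod Suc m)) * f 0"
    by (simp add: prod.lessThan_Suc)
  also have "(\<Prod>i<m. f ((i + 1) mod Suc m)) = (\<Prod>i<m. f (Suc i))"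
    by (rule prod.cong) auto
  also have "(\<Prod>i<m. f (Suc i)) * f 0 = (\<Prod>i<Suc m. f i)"
    by (simp only: prod.lessThan_Suc_shift mult.commute)
  finally show ?thesis using m by simp
qed



lemma no_cycle:
  assumes cyc: "is_cycle N vs" and alt: "alternating (born_free_edges N) vs" and fl: "flat vs"
  shows False
proof -
  define n where "n = length vs"
  define E where "E = born_free_edges N"
  define a where "a = (\<lambda>i. vs ! i)"
  define b where "b = (\<lambda>i. vs ! ((i + 1) mod n))"
  define r where "r = (\<lambda>i. max (a i) (b i) div min (a i) (b i))"
  have n3: "n \<ge> 3" and adj: "\<And>i. i < n \<Longrightarrow> G_adj N (a i) (b i)"
    using cyc by (auto simp: is_cycle_def n_def a_def b_def)
  have nx: "\<And>i. (i + 1) mod n < n" using n3 by simp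
  have ab: "\<And>i. a ((i + 1) mod n) = b i" by (simp add: a_def b_def)
  have ce: "\<And>i. cyc_edge vs i = {a i, b i}" by (simp add: cyc_edge_def a_def b_def n_def)
  define m where "m = (\<lambda>i. {a i, b i} \<in> E)"
  have mnx: "\<And>i. i < n \<Longrightarrow> m ((i + 1) mod n) \<longleftrightarrow> \<not> m i"
    using alt unfolding alternating_def m_def E_def ce n_def[symmetric] by blast
  have ed: "\<And>i. i < n \<Longrightarrow> prime (r i) \<and> 1 \<le> min (a i) (b i) \<and>
      max (a i) (b i) = r i * min (a i) (b i) \<and> min (a i) (b i) < max (a i) (b i)"
    unfolding r_def using adj adj_info by blast
  obtain k where k: "\<forall>v\<in>set vs. rank v = k \<or> rank v = k + 1" using fl flat_def by blast
  have ain: "\<And>i. i < n \<Longrightarrow> a i \<in> set vs" by (simp add: a_def n_def)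
  have bin: "\<And>i. i < n \<Longrightarrow> b i \<in> set vs" using nx by (simp add: b_def n_def)
  define up where "up = (\<lambda>i. a i < b i)"
  have rk: "\<And>i. i < n \<Longrightarrow> (up i \<longrightarrow> b i = r i * a i \<and> rank (b i) = rank (a i) + 1)
       \<and> (\<not> up i \<longrightarrow> a i = r i * b i \<and> rank (a i) = rank (b i) + 1)"
  proof -
    fix i assume i: "i < n"
    note e = ed[OF i]
    show "?thesis i"
    proof (cases "up i")
      case True
      then have "b i = r i * a i" using e by (simp add: up_def max_def min_def)
      moreover have "rank (b i) = rank (a i) + 1"
        using e calculation rank_mult_prime[of "r i" "a i"] True by (simp add: up_def min_def)
      ultimately show ?thesis using True by simp
    next
      case False
      then have "a i = r i * b i" using e by (auto simp: up_def max_def min_def split: if_splits)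
      moreover have "b i \<le> a i" using False by (simp add: up_def)
      moreover have "b i \<ge> 1" using e calculation by (simp add: min_def split: if_splits)
      moreover have "rank (a i) = rank (b i) + 1"
        using e calculation rank_mult_prime[of "r i" "b i"] by simp
      ultimately show ?thesis using False by blast
    qed
  qed
  have rka: "\<And>i. i < n \<Longrightarrow> rank (a i) = k \<or> rank (a i) = k + 1" using k ain by blast
  have rkb: "\<And>i. i < n \<Longrightarrow> rank (b i) = k \<or> rank (b i) = k + 1" using k bin by blast
  have upk: "\<And>i. i < n \<Longrightarrow> up i \<longleftrightarrow> rank (a i) = k"
  proof -
    fix i assume i: "i < n"
    show "?thesis i" using rk[OF i] rka[OF i] rkb[OF i] by (cases "up i") auto
  qed
  have upnx: "\<And>i. i < n \<Longrightarrow> up ((i + 1) mod n) \<longleftrightarrow> \<not> up i"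
  proof -
    fix i assume i: "i < n"
    have "up ((i + 1) mod n) \<longleftrightarrow> rank (b i) = k" using upk[OF nx] ab by simp
    note h = this
    show "?thesis i"
    proof (cases "up i")
      case True
      then have "rank (a i) = k" using upk[OF i] by blast
      moreover have "rank (b i) = rank (a i) + 1" using rk[OF i] True by blast
      ultimately show ?thesis using h True by simp
    next
      case False
      then have "rank (a i) = k + 1" using upk[OF i] rka[OF i] by blast
      moreover have "rank (a i) = rank (b i) + 1" using rk[OF i] False by blast
      ultimately have "rank (b i) = k" by linarith
      then show ?thesis using h False by simp
    qed
  qed
  have mup: "\<And>i. i < n \<Longrightarrow> m i \<longleftrightarrow> (up i \<longleftrightarrow> (m 0 \<longleftrightarrow> up 0))"
  proof -
    fix i assume "i < n"
    then show "?thesis i"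
    proof (induction i)
      case 0 then show ?case by blast
    next
      case (Suc i)
      then have "(i + 1) mod n = Suc i" by simp
      then show ?case using Suc mnx[of i] upnx[of i] by auto
    qed
  qed
  define U where "U = (\<lambda>i. if up i then r i else 1)"
  define D where "D = (\<lambda>i. if up i then 1 else r i)"
  have eq: "\<And>i. i < n \<Longrightarrow> a i * U i = b i * D i"
    using rk by (auto simp: U_def D_def)
  have "(\<Prod>i<n. a i) * (\<Prod>i<n. U i) = (\<Prod>i<n. a i * U i)" by (simp add: prod.distrib)
  also have "\<dots> = (\<Prod>i<n. b i * D i)" by (rule prod.cong) (auto simp: eq)
  also have "\<dots> = (\<Prod>i<n. b i) * (\<Prod>i<n. D i)" by (simp add: prod.distrib)
  also have "(\<Prod>i<n. b i) = (\<Prod>i<n. a i)" unfolding ab[symmetric] using n3 prod_shift[of n a] by simp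
  finally have pe: "(\<Prod>i<n. a i) * (\<Prod>i<n. U i) = (\<Prod>i<n. a i) * (\<Prod>i<n. D i)" .
  have "\<And>i. i < n \<Longrightarrow> a i \<noteq> 0"
  proof -
    fix i assume "i < n"
    then have "1 \<le> min (a i) (b i)" using ed by blast
    then show "a i \<noteq> 0" by linarith
  qed
  then have "(\<Prod>i<n. a i) \<noteq> 0" by simp
  then have UD: "(\<Prod>i<n. U i) = (\<Prod>i<n. D i)" using pe by (metis mult_left_cancel)
  define P where "P = Max (r ` {..<n})"
  have Pin: "P \<in> r ` {..<n}" unfolding P_def using n3 by (intro Max_in) (auto simp: lessThan_empty_iff)
  have Pge: "\<And>i. i < n \<Longrightarrow> r i \<le> P" unfolding P_def by (intro Max_ge) auto
  obtain j where j: "j < n" "r j = P" using Pin by auto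
  have pP: "prime P" using ed j by blast
  have both: "(\<exists>i<n. r i = P \<and> up i) \<and> (\<exists>i<n. r i = P \<and> \<not> up i)"
  proof (cases "up j")
    case True
    have "P dvd (\<Prod>i<n. U i)" using j True by (metis U_def dvd_prodI finite_lessThan lessThan_iff)
    then have "P dvd (\<Prod>i<n. D i)" using UD by simp
    then obtain i where i: "i < n" "P dvd D i" using pP prime_dvd_prod_iff[of "{..<n}" P D] by auto
    then have "\<not> up i" "P dvd r i" using pP by (auto simp: D_def split: if_splits)
    then have "r i = P" using ed[OF i(1)] pP by (metis primes_dvd_imp_eq)
    then show ?thesis using True j i \<open>\<not> up i\<close> by blast
  next
    case False
    have "P dvd (\<Prod>i<n. D i)" using j False by (metis D_def dvd_prodI finite_lessThan lessThan_iff)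
    then have "P dvd (\<Prod>i<n. U i)" using UD by simp
    then obtain i where i: "i < n" "P dvd U i" using pP prime_dvd_prod_iff[of "{..<n}" P U] by auto
    then have "up i" "P dvd r i" using pP by (auto simp: U_def split: if_splits)
    then have "r i = P" using ed[OF i(1)] pP by (metis primes_dvd_imp_eq)
    then show ?thesis using False j i \<open>up i\<close> by blast
  qed
  obtain i where i: "i < n" "r i = P" "\<not> m i"
    using both mup by metis
  define y where "y = min (a i) (b i)"
  define q where "q = r i"
  have yq: "{a i, b i} = {y, q * y}" using ed[OF i(1)] unfolding y_def q_def
    by (cases "a i \<le> b i") (auto simp: max_def min_def)
  have qprime: "prime q" "1 \<le> y" using ed[OF i(1)] by (auto simp: q_def y_def)
  have qyN: "q * y \<le> N"
  proof -
    have "q * y \<in> {a i, b i}" using yq by blast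
    moreover have "a i \<le> N" "b i \<le> N" using adj[OF i(1)] unfolding G_adj_def by auto
    ultimately show ?thesis by auto
  qed
  have "(y, q * y) \<notin> born_free N"
  proof
    assume "(y, q * y) \<in> born_free N"
    then have "{y, q * y} \<in> E" unfolding E_def born_free_edges_def by force
    then show False using i(3) yq m_def by simp
  qed
  then obtain p x where px: "(x, p * x) \<in> born_free N" "prime p" "1 \<le> x"
     "y \<in> {x, p * x} \<or> q * y \<in> {x, p * x}" "p > q \<or> (p = q \<and> x > y)"
    using block[OF qprime qyN] by blast
  obtain v where v: "v \<in> {a i, b i}" "v \<in> {x, p * x}" using px(4) yq by blast
  obtain j' where j': "j' < n" "m j'" "v \<in> {a j', b j'}"
  proof (cases "v = a i")
    case True
    define j' where "j' = (if i = 0 then n - 1 else i - 1)"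
    have jn: "j' < n" unfolding j'_def using i(1) n3 by auto
    have "(j' + 1) mod n = i" unfolding j'_def using i(1) n3 by auto
    then have "m j'" "b j' = a i" using mnx[OF jn] i(3) ab[of j'] by auto
    then show ?thesis using that[of j'] True jn by auto
  next
    case False
    then have "v = b i" using v by auto
    then show ?thesis using that[of "(i + 1) mod n"] nx mnx[OF i(1)] i(3) ab by auto
  qed
  have mat: "is_matching (G_edges N) E" unfolding E_def by (rule matching)
  have xE: "{x, p * x} \<in> E" using px(1) unfolding E_def born_free_edges_def by force
  have jE: "{a j', b j'} \<in> E" using j'(2) m_def by simp
  have dj: "\<forall>e\<in>E. \<forall>e'\<in>E. e \<noteq> e' \<longrightarrow> e \<inter> e' = {}" using mat unfolding is_matching_def by blast
  have "v \<in> {x, p * x} \<inter> {a j', b j'}" using v(2) j'(3) by blast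
  note vin = this
  have same: "{x, p * x} = {a j', b j'}"
  proof (rule ccontr)
    assume ne: "{x, p * x} \<noteq> {a j', b j'}"
    have "{x, p * x} \<inter> {a j', b j'} = {}" using dj xE jE ne by simp
    then show False using vin by simp
  qed
  have xlt: "x < p * x" using px(2,3) prime_gt_1_nat by simp
  have "r j' = p"
  proof -
    have "(a j' = x \<and> b j' = p * x) \<or> (a j' = p * x \<and> b j' = x)" using same
      by (auto simp: doubleton_eq_iff)
    then have "min (a j') (b j') = x \<and> max (a j') (b j') = p * x"
    proof
      assume "a j' = x \<and> b j' = p * x" then show ?thesis using xlt by (simp add: min_def max_def)
    next
      assume "a j' = p * x \<and> b j' = x" then show ?thesis using xlt by (simp add: min_def max_def)
    qed
    then show ?thesis using px(3) by (simp add: r_def)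
  qed
  then have "p \<le> q" using Pge[OF j'(1)] i(2) q_def by simp
  then have pq: "p = q" "x > y" using px(5) by auto
  have vy: "v = y \<or> v = q * y" using v(1) yq by auto
  have q2: "q \<ge> 2" using qprime prime_ge_2_nat by blast
  show False
  proof -
    have "v = q * y" "v = x"
    proof -
      show "v = q * y" using vy v(2) pq q2 xlt by auto
      then show "v = x" using v(2) pq qprime by auto
    qed
    then have "p * x = q * (q * y)" using pq by simp
    moreover have "p * x \<in> {a j', b j'}" using same by blast
    ultimately have "q * (q * y) \<in> {a j', b j'}" by simp
    then have "q * (q * y) \<in> set vs" using ain[OF j'(1)] bin[OF j'(1)] by auto
    moreover have "y \<in> {a i, b i}" using yq by simp
    then have "y \<in> set vs" using ain[OF i(1)] bin[OF i(1)] by auto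
    moreover have "rank (q * (q * y)) = rank y + 2"
    proof -
      have y0: "y > 0" using qprime by simp
      then have "q * y > 0" using qprime prime_gt_0_nat by simp
      then have "rank (q * (q * y)) = rank (q * y) + 1" using rank_mult_prime qprime by blast
      also have "rank (q * y) = rank y + 1" using rank_mult_prime qprime y0 by blast
      finally show ?thesis by simp
    qed
    ultimately have "rank y = k \<or> rank y = k + 1" "rank y + 2 = k \<or> rank y + 2 = k + 1"
      using k by metis+
    then show False by linarith
  qed
qed


theorem theorem3:
  fixes N :: nat
  assumes "N \<ge> 1"
  shows "is_matching (G_edges N) (born_free_edges N) \<and>
         \<not> (\<exists>vs. is_cycle N vs \<and> alternating (born_free_edges N) vs \<and> flat vs)"
  using matching no_cycle by blast

end
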